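(* Let $P$ and $Q$ be partial orders on the same finite ground set, and suppose the comparability graph of $P$ contains the comparability graph of $Q$ as a subgraph. Then $e(Q)\ge e(P)$, and if the containment is proper then $e(Q)>e(P)$.
   Context: The comparability graph of a poset is the simple graph on its ground set in which two distinct elements are adjacent iff they are comparable. $e(\cdot)$ denotes the number of linear extensions (order-preserving bijections from the ground set of size $n$ onto $[n]$). *)

theory Defs
  imports Main "HOL-Library.FuncSet"
begin

definition partial_order_on_set :: "'a set \<Rightarrow> ('a \<Rightarrow> 'a \<Rightarrow> bool) \<Rightarrow> bool" where
  "partial_order_on_set S R \<longleftrightarrow>
     (\<forall>x y. R x y \<longrightarrow> x \<in> S \<and> y \<in> S) \<and>
     (\<forall>x\<in>S. R x x) \<and>
     (\<forall>x y. R x y \<longrightarrow> R y x \<longrightarrow> x = y) \<and>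
     (\<forall>x y z. R x y \<longrightarrow> R y z \<longrightarrow> R x z)"

definition comp_graph :: "'a set \<Rightarrow> ('a \<Rightarrow> 'a \<Rightarrow> bool) \<Rightarrow> 'a set set" where
  "comp_graph S R = {{x, y} | x y. x \<in> S \<and> y \<in> S \<and> x \<noteq> y \<and> (R x y \<or> R y x)}"

text \<open>Linear extensions: order-preserving bijections from S onto {1..card S}
  (extensional outside S so that they form a finite set).\<close>
definition linear_extensions :: "'a set \<Rightarrow> ('a \<Rightarrow> 'a \<Rightarrow> bool) \<Rightarrow> ('a \<Rightarrow> nat) set" where
  "linear_extensions S R =
     {f \<in> extensional S. bij_betw f S {1..card S} \<and> (\<forall>x y. R x y \<longrightarrow> f x \<le> f y)}"

definition num_linear_extensions :: "'a set \<Rightarrow> ('a \<Rightarrow> 'a \<Rightarrow> bool) \<Rightarrow> nat" where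
  "num_linear_extensions S R = card (linear_extensions S R)"

end

theory Submission
  imports Defs Complex_Main
begin


definition pchain :: "('a \<Rightarrow> 'a \<Rightarrow> bool) \<Rightarrow> 'a set \<Rightarrow> bool" where
  "pchain P C \<longleftrightarrow> (\<forall>x\<in>C. \<forall>y\<in>C. P x y \<or> P y x)"

definition Mx :: "('a \<Rightarrow> 'a \<Rightarrow> bool) \<Rightarrow> 'a set \<Rightarrow> ('a \<Rightarrow> nat) \<Rightarrow> 'a \<Rightarrow> nat" where
  "Mx P S f x = Max (insert 0 (f ` {y\<in>S. P y x \<and> y \<noteq> x}))"

definition chainsums :: "('a \<Rightarrow> 'a \<Rightarrow> bool) \<Rightarrow> 'a set \<Rightarrow> ('a \<Rightarrow> nat) \<Rightarrow> 'a \<Rightarrow> nat set" where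
  "chainsums P S g x = {sum g C | C. C \<subseteq> S \<and> pchain P C \<and> x \<in> C \<and> (\<forall>c\<in>C. P c x)}"

definition psi :: "('a \<Rightarrow> 'a \<Rightarrow> bool) \<Rightarrow> 'a set \<Rightarrow> ('a \<Rightarrow> nat) \<Rightarrow> 'a \<Rightarrow> nat" where
  "psi P S g = restrict (\<lambda>x. Max (chainsums P S g x)) S"

definition phi :: "('a \<Rightarrow> 'a \<Rightarrow> bool) \<Rightarrow> 'a set \<Rightarrow> ('a \<Rightarrow> nat) \<Rightarrow> 'a \<Rightarrow> nat" where
  "phi P S f = restrict (\<lambda>x. f x - Mx P S f x) S"

definition OP :: "'a set \<Rightarrow> ('a \<Rightarrow> 'a \<Rightarrow> bool) \<Rightarrow> nat \<Rightarrow> ('a \<Rightarrow> nat) set" where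
  "OP S P m = {f \<in> extensional S. (\<forall>x\<in>S. f x \<le> m) \<and> (\<forall>x y. P x y \<longrightarrow> f x \<le> f y)}"

definition CP :: "'a set \<Rightarrow> ('a \<Rightarrow> 'a \<Rightarrow> bool) \<Rightarrow> nat \<Rightarrow> ('a \<Rightarrow> nat) set" where
  "CP S P m = {g \<in> extensional S. \<forall>C. C \<subseteq> S \<longrightarrow> pchain P C \<longrightarrow> sum g C \<le> m}"

lemma po_D:
  assumes "partial_order_on_set S P"
  shows "\<And>x y. P x y \<Longrightarrow> x \<in> S" "\<And>x y. P x y \<Longrightarrow> y \<in> S" "\<And>x. x \<in> S \<Longrightarrow> P x x"
    "\<And>x y. P x y \<Longrightarrow> P y x \<Longrightarrow> x = y" "\<And>x y z. P x y \<Longrightarrow> P y z \<Longrightarrow> P x z"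
  using assms unfolding partial_order_on_set_def by blast+

lemma chain_max:
  assumes "finite C" "C \<noteq> {}" "pchain P C"
    and tr: "\<And>x y z. P x y \<Longrightarrow> P y z \<Longrightarrow> P x z"
  shows "\<exists>z\<in>C. \<forall>c\<in>C. P c z"
  using assms(1,2,3)
proof (induction C rule: finite_ne_induct)
  case (singleton x) then show ?case by (auto simp: pchain_def)
next
  case (insert x F)
  from insert.prems have cF: "pchain P F" by (auto simp: pchain_def)
  from insert.IH[OF cF] obtain z where z: "z \<in> F" "\<forall>c\<in>F. P c z" by blast
  have "P x z \<or> P z x" using insert.prems z(1) by (auto simp: pchain_def)
  then show ?case
  proof
    assume "P x z" then show ?thesis using z by auto
  next
    assume "P z x" then show ?thesis using z insert.prems tr by (auto simp: pchain_def)
  qed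
qed

lemma pchain_subset: "pchain P C \<Longrightarrow> D \<subseteq> C \<Longrightarrow> pchain P D"
  by (auto simp: pchain_def)

lemma OP_finite: "finite S \<Longrightarrow> finite (OP S P m)"
proof -
  assume f: "finite S"
  have "OP S P m \<subseteq> PiE S (\<lambda>_. {..m})" by (auto simp: OP_def PiE_iff extensional_def)
  then show ?thesis using finite_PiE[OF f] by (meson finite_atMost finite_subset)
qed

lemma CP_finite:
  assumes "finite S" "partial_order_on_set S P"
  shows "finite (CP S P m)"
proof -
  have "CP S P m \<subseteq> PiE S (\<lambda>_. {..m})"
  proof
    fix g assume g: "g \<in> CP S P m"
    have "g x \<le> m" if "x \<in> S" for x
    proof -
      have "pchain P {x}" using po_D(3)[OF assms(2) that] by (auto simp: pchain_def)
      then show ?thesis using g that unfolding CP_def by force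
    qed
    then show "g \<in> PiE S (\<lambda>_. {..m})" using g by (auto simp: CP_def PiE_iff)
  qed
  then show ?thesis using finite_PiE[OF assms(1)] by (meson finite_atMost finite_subset)
qed

context
  fixes S :: "'a set" and P :: "'a \<Rightarrow> 'a \<Rightarrow> bool"
  assumes fin: "finite S" and po: "partial_order_on_set S P"
begin

lemma chain_max':
  "finite C \<Longrightarrow> C \<noteq> {} \<Longrightarrow> pchain P C \<Longrightarrow> \<exists>z\<in>C. \<forall>c\<in>C. P c z"
  using chain_max[of C P] po_D(5)[OF po] by blast

lemma chainsums_fin: "finite (chainsums P S g x)"
proof -
  have "chainsums P S g x \<subseteq> sum g ` Pow S" by (auto simp: chainsums_def)
  then show ?thesis using fin finite_subset by blast
qed

lemma chainsums_ne: "x \<in> S \<Longrightarrow> g x \<in> chainsums P S g x"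
  unfolding chainsums_def
  apply (rule CollectI, rule exI[of _ "{x}"])
  using po_D(3)[OF po] by (auto simp: pchain_def)

lemma Mx_fin: "finite (insert 0 (f ` {y\<in>S. P y x \<and> y \<noteq> x}))"
  using fin by auto

lemma psi_rec:
  assumes x: "x \<in> S"
  shows "psi P S g x = g x + Mx P S (psi P S g) x"
proof (rule antisym)
  show "psi P S g x \<le> g x + Mx P S (psi P S g) x"
    unfolding psi_def using x
  proof (simp, intro Max.boundedI[OF chainsums_fin])
    show "chainsums P S g x \<noteq> {}" using chainsums_ne[OF x] by blast
  next
    fix s assume "s \<in> chainsums P S g x"
    then obtain C where C: "s = sum g C" "C \<subseteq> S" "pchain P C" "x \<in> C" "\<forall>c\<in>C. P c x"
      unfolding chainsums_def by blast
    have fC: "finite C" using C(2) fin finite_subset by blast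
    have s: "s = g x + sum g (C - {x})" using C(1,4) fC by (simp add: sum.remove)
    show "s \<le> g x + Mx P S (restrict (\<lambda>x. Max (chainsums P S g x)) S) x"
    proof (cases "C - {x} = {}")
      case True then have "sum g (C - {x}) = 0" by (metis sum.empty)
      then show ?thesis using s by simp
    next
      case False
      obtain y where y: "y \<in> C - {x}" "\<forall>c\<in>C - {x}. P c y"
        using chain_max'[OF _ False pchain_subset[OF C(3)]] fC by blast
      have yS: "y \<in> S" "P y x" "y \<noteq> x" using y C by auto
      have "sum g (C - {x}) \<in> chainsums P S g y"
        unfolding chainsums_def using C y pchain_subset[OF C(3)] by blast
      then have "sum g (C - {x}) \<le> Max (chainsums P S g y)"
        using chainsums_fin by (simp add: Max_ge)
      also have "\<dots> \<le> Mx P S (restrict (\<lambda>x. Max (chainsums P S g x)) S) x"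
        unfolding Mx_def using yS by (intro Max_ge[OF Mx_fin]) auto
      finally show ?thesis using s by simp
    qed
  qed
next
  have "Mx P S (psi P S g) x \<in> insert 0 (psi P S g ` {y\<in>S. P y x \<and> y \<noteq> x})"
    unfolding Mx_def by (rule Max_in[OF Mx_fin]) simp
  then show "g x + Mx P S (psi P S g) x \<le> psi P S g x"
  proof
    assume "Mx P S (psi P S g) x = 0"
    then show ?thesis using chainsums_ne[OF x] chainsums_fin x
      by (simp add: psi_def Max_ge)
  next
    assume "Mx P S (psi P S g) x \<in> psi P S g ` {y\<in>S. P y x \<and> y \<noteq> x}"
    then obtain y where y: "y \<in> S" "P y x" "y \<noteq> x" "Mx P S (psi P S g) x = psi P S g y" by blast
    have ne: "chainsums P S g y \<noteq> {}" using chainsums_ne[OF y(1), of g] by (metis empty_iff)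
    have pe: "psi P S g y = Max (chainsums P S g y)" using y(1) unfolding psi_def by (rule restrict_apply')
    have "psi P S g y \<in> chainsums P S g y"
      unfolding pe by (rule Max_in[OF chainsums_fin ne])
    then obtain C where C: "psi P S g y = sum g C" "C \<subseteq> S" "pchain P C" "y \<in> C" "\<forall>c\<in>C. P c y"
      unfolding chainsums_def by blast
    have xC: "x \<notin> C" using C(5) y(2,3) po_D(4)[OF po] by blast
    have fC: "finite C" using C(2) fin finite_subset by blast
    have "sum g (insert x C) \<in> chainsums P S g x"
      unfolding chainsums_def
    proof (intro CollectI exI conjI)
      have tr: "P c x" if "c \<in> C" for c using C(5) y(2) po_D(5)[OF po] that by meson
      show "pchain P (insert x C)" using C(3) tr po_D(3)[OF po] x unfolding pchain_def by auto
      show "\<forall>c\<in>insert x C. P c x" using tr po_D(3)[OF po] x by auto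
      show "insert x C \<subseteq> S" using C(2) x by auto
    qed (rule refl, simp)
    then have "sum g (insert x C) \<le> psi P S g x" unfolding psi_def using x chainsums_fin
      by (simp add: Max_ge)
    then show ?thesis using y(4) C(1) xC fC by simp
  qed
qed


lemma Mx_ge: "y \<in> S \<Longrightarrow> P y x \<Longrightarrow> y \<noteq> x \<Longrightarrow> f y \<le> Mx P S f x"
  unfolding Mx_def by (rule Max_ge[OF Mx_fin]) auto

lemma psi_OP:
  assumes g: "g \<in> CP S P m"
  shows "psi P S g \<in> OP S P m"
proof -
  have bd: "psi P S g x \<le> m" if x: "x \<in> S" for x
  proof -
    have ne: "chainsums P S g x \<noteq> {}" using chainsums_ne[OF x, of g] by (metis empty_iff)
    have pe: "psi P S g x = Max (chainsums P S g x)" using x unfolding psi_def by (rule restrict_apply')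
    have "psi P S g x \<in> chainsums P S g x"
      unfolding pe by (rule Max_in[OF chainsums_fin ne])
    then obtain C where "psi P S g x = sum g C" "C \<subseteq> S" "pchain P C"
      unfolding chainsums_def by blast
    then show ?thesis using g unfolding CP_def by auto
  qed
  have mono: "psi P S g x \<le> psi P S g y" if "P x y" for x y
  proof (cases "x = y")
    case False
    have xy: "x \<in> S" "y \<in> S" using po_D(1,2)[OF po that] by auto
    have "psi P S g x \<le> Mx P S (psi P S g) y" using Mx_ge[OF xy(1) that False] .
    then show ?thesis using psi_rec[OF xy(2), of g] by linarith
  qed simp
  show ?thesis unfolding OP_def using bd mono by (auto simp: psi_def)
qed

lemma psi_inj: "inj_on (psi P S) (CP S P m)"
proof (rule inj_onI)
  fix g1 g2 assume g: "g1 \<in> CP S P m" "g2 \<in> CP S P m" and eq: "psi P S g1 = psi P S g2"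
  show "g1 = g2"
  proof (rule extensionalityI)
    show "g1 \<in> extensional S" "g2 \<in> extensional S" using g by (auto simp: CP_def)
    fix x assume x: "x \<in> S"
    show "g1 x = g2 x" using psi_rec[OF x, of g1] psi_rec[OF x, of g2] eq by simp
  qed
qed

lemma Mx_le: "f \<in> OP S P m \<Longrightarrow> Mx P S f x \<le> f x"
  unfolding Mx_def OP_def by (intro Max.boundedI[OF Mx_fin]) auto

lemma phi_rec: assumes "f \<in> OP S P m" "x \<in> S" shows "f x = phi P S f x + Mx P S f x"
proof -
  have "Mx P S f x \<le> f x" by (rule Mx_le[OF assms(1)])
  then show ?thesis using assms(2) by (simp add: phi_def)
qed

lemma phi_chain:
  assumes f: "f \<in> OP S P m"
  shows "finite C \<Longrightarrow> C \<subseteq> S \<Longrightarrow> pchain P C \<Longrightarrow> x \<in> S \<Longrightarrow> (\<forall>c\<in>C. P c x) \<Longrightarrow> sum (phi P S f) C \<le> f x"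
proof (induction C arbitrary: x rule: finite_psubset_induct)
  case (psubset C)
  show ?case
  proof (cases "C = {}")
    case False
    obtain z where z: "z \<in> C" "\<forall>c\<in>C. P c z" using chain_max'[OF psubset.hyps False psubset.prems(2)] by blast
    have zS: "z \<in> S" using z psubset.prems by auto
    have s: "sum (phi P S f) C = phi P S f z + sum (phi P S f) (C - {z})"
      using z(1) psubset.hyps by (simp add: sum.remove)
    have "sum (phi P S f) (C - {z}) \<le> Mx P S f z"
    proof (cases "C - {z} = {}")
      case True then show ?thesis by (metis sum.empty zero_le)
    next
      case False
      obtain y where y: "y \<in> C - {z}" "\<forall>c\<in>C - {z}. P c y"
        using chain_max'[OF _ False pchain_subset[OF psubset.prems(2)]] psubset.hyps by blast
      have yS: "y \<in> S" "P y z" "y \<noteq> z" using y z psubset.prems by auto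
      have "sum (phi P S f) (C - {z}) \<le> f y"
        using psubset.IH[of "C - {z}" y] z(1) y(2) yS(1) psubset.prems pchain_subset[OF psubset.prems(2)] by blast
      also have "\<dots> \<le> Mx P S f z" using Mx_ge[OF yS] .
      finally show ?thesis .
    qed
    then have "sum (phi P S f) C \<le> f z" using s phi_rec[OF f zS] by linarith
    also have "f z \<le> f x" using f z(1) psubset.prems(4) unfolding OP_def by auto
    finally show ?thesis .
  qed simp
qed

lemma phi_CP:
  assumes f: "f \<in> OP S P m"
  shows "phi P S f \<in> CP S P m"
proof -
  have "sum (phi P S f) C \<le> m" if C: "C \<subseteq> S" "pchain P C" for C
  proof (cases "C = {}")
    case False
    have fC: "finite C" using C fin finite_subset by blast
    obtain z where z: "z \<in> C" "\<forall>c\<in>C. P c z" using chain_max'[OF fC False C(2)] by blast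
    have "sum (phi P S f) C \<le> f z" using phi_chain[OF f fC C(1,2) _ z(2)] z(1) C(1) by auto
    also have "\<dots> \<le> m" using f z(1) C(1) unfolding OP_def by auto
    finally show ?thesis .
  qed simp
  then show ?thesis unfolding CP_def by (auto simp: phi_def)
qed

lemma phi_inj: "inj_on (phi P S) (OP S P m)"
proof (rule inj_onI)
  fix f1 f2 assume f: "f1 \<in> OP S P m" "f2 \<in> OP S P m" and eq: "phi P S f1 = phi P S f2"
  have "\<forall>x. x \<in> S \<longrightarrow> f1 x = f2 x"
  proof
    fix x
    show "x \<in> S \<longrightarrow> f1 x = f2 x"
    proof (induction "card {y\<in>S. P y x}" arbitrary: x rule: less_induct)
      case less
      show ?case
      proof
        assume x: "x \<in> S"
        have "f1 y = f2 y" if y: "y \<in> {y\<in>S. P y x \<and> y \<noteq> x}" for y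
        proof -
          have sub: "{z\<in>S. P z y} \<subset> {z\<in>S. P z x}"
            using y x po_D(5)[OF po] po_D(4)[OF po] po_D(3)[OF po] by blast
          have "card {z\<in>S. P z y} < card {z\<in>S. P z x}"
            by (rule psubset_card_mono[OF _ sub]) (use fin in auto)
          then show ?thesis using less y by blast
        qed
        then have "Mx P S f1 x = Mx P S f2 x" unfolding Mx_def
          by (metis (no_types, lifting) image_cong)
        then show "f1 x = f2 x" using phi_rec[OF f(1) x] phi_rec[OF f(2) x] eq by simp
      qed
    qed
  qed
  then show "f1 = f2" using f by (intro extensionalityI[of _ S]) (auto simp: OP_def)
qed

lemma OP_CP_card: "card (OP S P m) = card (CP S P m)"
proof (rule antisym)
  show "card (OP S P m) \<le> card (CP S P m)"
    by (rule card_inj_on_le[OF phi_inj]) (use phi_CP CP_finite[OF fin po] in auto)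
  show "card (CP S P m) \<le> card (OP S P m)"
    by (rule card_inj_on_le[OF psi_inj]) (use psi_OP OP_finite[OF fin] in auto)
qed

end


definition hT :: "nat set \<Rightarrow> nat \<Rightarrow> nat" where
  "hT T k = sorted_list_of_set T ! (k - 1)"

lemma hT_mono:
  assumes "finite T" "i \<in> {1..card T}" "j \<in> {1..card T}" "i < j"
  shows "hT T i < hT T j"
proof -
  have "sorted_wrt (<) (sorted_list_of_set T)" by (rule strict_sorted_list_of_set)
  moreover have "i - 1 < j - 1" "j - 1 < length (sorted_list_of_set T)"
    using assms length_sorted_list_of_set[of T] by auto
  ultimately show ?thesis unfolding hT_def by (rule sorted_wrt_nth_less)
qed

lemma hT_bij:
  assumes "finite T"
  shows "bij_betw (hT T) {1..card T} T"
proof -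
  let ?L = "sorted_list_of_set T"
  have len: "length ?L = card T" using assms by simp
  have st: "set ?L = T" using assms by simp
  have inj: "inj_on (hT T) {1..card T}"
  proof (rule inj_onI)
    fix i j assume ij: "i \<in> {1..card T}" "j \<in> {1..card T}" "hT T i = hT T j"
    show "i = j"
    proof (rule ccontr)
      assume "i \<noteq> j"
      then have "i < j \<or> j < i" by arith
      then show False using hT_mono[OF assms ij(1,2)] hT_mono[OF assms ij(2,1)] ij(3) by auto
    qed
  qed
  have "hT T ` {1..card T} = T"
  proof
    show "hT T ` {1..card T} \<subseteq> T"
    proof
      fix t assume "t \<in> hT T ` {1..card T}"
      then obtain i where i: "i \<in> {1..card T}" "t = ?L ! (i - 1)" unfolding hT_def by blast
      then have "i - 1 < length ?L" using len by auto
      then show "t \<in> T" using i(2) st nth_mem by blast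
    qed
  next
    show "T \<subseteq> hT T ` {1..card T}"
    proof
      fix t assume "t \<in> T"
      then obtain i where i: "i < length ?L" "?L ! i = t" using st by (metis in_set_conv_nth)
      then have "hT T (i + 1) = t" "i + 1 \<in> {1..card T}" using len by (auto simp: hT_def)
      then show "t \<in> hT T ` {1..card T}" by (metis image_eqI)
    qed
  qed
  then show ?thesis using inj by (simp add: bij_betw_def)
qed

definition Sub :: "nat \<Rightarrow> nat \<Rightarrow> nat set set" where
  "Sub m n = {T. T \<subseteq> {0..m} \<and> card T = n}"

definition Phi :: "'a set \<Rightarrow> ('a \<Rightarrow> nat) \<times> nat set \<Rightarrow> 'a \<Rightarrow> nat" where
  "Phi S p = restrict (\<lambda>x. hT (snd p) (fst p x)) S"

lemma card_Sub: "card (Sub m n) = Suc m choose n"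
  unfolding Sub_def using n_subsets[of "{0..m}" n] by simp

context
  fixes S :: "'a set" and P :: "'a \<Rightarrow> 'a \<Rightarrow> bool"
  assumes fin: "finite S" and po: "partial_order_on_set S P"
begin

definition INJ where "INJ m = {f \<in> OP S P m. inj_on f S}"

lemma Phi_INJ:
  assumes s: "s \<in> linear_extensions S P" and T: "T \<in> Sub m (card S)"
  shows "Phi S (s, T) \<in> INJ m"
proof -
  have bs: "bij_betw s S {1..card S}" and ms: "\<And>x y. P x y \<Longrightarrow> s x \<le> s y"
    using s unfolding linear_extensions_def by auto
  have Tf: "finite T" "T \<subseteq> {0..m}" "card T = card S" using T unfolding Sub_def
    by (auto intro: finite_subset)
  have bh: "bij_betw (hT T) {1..card S} T" using hT_bij[OF Tf(1)] Tf(3) by simp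
  have comp: "bij_betw (\<lambda>x. hT T (s x)) S T" using bij_betw_trans[OF bs bh] by (simp add: o_def)
  have "\<forall>x\<in>S. hT T (s x) \<le> m" using bij_betwE[OF comp] Tf(2) by force
  moreover have "hT T (s x) \<le> hT T (s y)" if "P x y" for x y
  proof -
    have xy: "x \<in> S" "y \<in> S" using po_D(1,2)[OF po that] by auto
    have "s x \<in> {1..card S}" "s y \<in> {1..card S}" using bs xy unfolding bij_betw_def by auto
    moreover have "s x \<le> s y" using ms[OF that] .
    ultimately show ?thesis using hT_mono[OF Tf(1)] Tf(3)
      by (metis order.order_iff_strict order.strict_implies_order)
  qed
  moreover have "inj_on (\<lambda>x. hT T (s x)) S" using comp by (simp add: bij_betw_def)
  ultimately show ?thesis unfolding INJ_def OP_def Phi_def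
    using po_D(1,2)[OF po] by (auto simp: inj_on_def)
qed

lemma Phi_inj: "inj_on (Phi S) (linear_extensions S P \<times> Sub m (card S))"
proof (rule inj_onI)
  fix p q assume p: "p \<in> linear_extensions S P \<times> Sub m (card S)"
    and q: "q \<in> linear_extensions S P \<times> Sub m (card S)" and eq: "Phi S p = Phi S q"
  obtain s T where pp: "p = (s, T)" by (cases p)
  obtain s' T' where qq: "q = (s', T')" by (cases q)
  have bs: "bij_betw s S {1..card S}" "bij_betw s' S {1..card S}"
    using p q pp qq unfolding linear_extensions_def by auto
  have Tf: "finite T" "card T = card S" "finite T'" "card T' = card S" using p q pp qq unfolding Sub_def
    by (auto intro: finite_subset)
  have bh: "bij_betw (hT T) {1..card S} T" "bij_betw (hT T') {1..card S} T'"
    using hT_bij[OF Tf(1)] hT_bij[OF Tf(3)] Tf by auto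
  have im: "Phi S (s,T) ` S = T" "Phi S (s',T') ` S = T'"
  proof -
    have "Phi S (s,T) ` S = hT T ` (s ` S)" unfolding Phi_def by auto
    then show "Phi S (s,T) ` S = T" using bs(1) bh(1) by (simp add: bij_betw_def)
    have "Phi S (s',T') ` S = hT T' ` (s' ` S)" unfolding Phi_def by auto
    then show "Phi S (s',T') ` S = T'" using bs(2) bh(2) by (simp add: bij_betw_def)
  qed
  have TT: "T = T'" using im eq pp qq by simp
  have "s x = s' x" if x: "x \<in> S" for x
  proof -
    have "hT T (s x) = hT T (s' x)" using fun_cong[OF eq, of x] x pp qq TT by (simp add: Phi_def)
    moreover have "s x \<in> {1..card S}" "s' x \<in> {1..card S}" using bs x unfolding bij_betw_def by auto
    ultimately show ?thesis using bh(1) unfolding bij_betw_def inj_on_def by blast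
  qed
  moreover have "s \<in> extensional S" "s' \<in> extensional S"
    using p q pp qq unfolding linear_extensions_def by auto
  ultimately have "s = s'" by (intro extensionalityI) auto
  then show "p = q" using pp qq TT by simp
qed

lemma Phi_surj:
  assumes f: "f \<in> INJ m"
  shows "f \<in> Phi S ` (linear_extensions S P \<times> Sub m (card S))"
proof -
  let ?T = "f ` S"
  have fo: "f \<in> extensional S" "\<forall>x\<in>S. f x \<le> m" "\<And>x y. P x y \<Longrightarrow> f x \<le> f y" "inj_on f S"
    using f unfolding INJ_def OP_def by auto
  have Tf: "finite ?T" "card ?T = card S" using fin fo(4) by (auto simp: card_image)
  have TS: "?T \<in> Sub m (card S)" using fo(2) Tf unfolding Sub_def by auto
  have bh: "bij_betw (hT ?T) {1..card S} ?T" using hT_bij[OF Tf(1)] Tf(2) by simp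
  define s where "s = restrict (\<lambda>x. the_inv_into {1..card S} (hT ?T) (f x)) S"
  have hs: "hT ?T (s x) = f x" if "x \<in> S" for x
    unfolding s_def using that f_the_inv_into_f_bij_betw[OF bh] by auto
  have bi: "bij_betw (the_inv_into {1..card S} (hT ?T)) ?T {1..card S}"
    by (rule bij_betw_the_inv_into[OF bh])
  have bf: "bij_betw f S ?T" using fo(4) by (simp add: bij_betw_def)
  have bs: "bij_betw s S {1..card S}"
  proof -
    have "bij_betw (\<lambda>x. the_inv_into {1..card S} (hT ?T) (f x)) S {1..card S}"
      using bij_betw_trans[OF bf bi] by (simp add: o_def)
    then show ?thesis by (rule bij_betw_cong[THEN iffD1, rotated]) (simp add: s_def)
  qed
  have ms: "s x \<le> s y" if "P x y" for x y
  proof (rule ccontr)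
    assume "\<not> s x \<le> s y"
    then have lt: "s y < s x" by simp
    have xy: "x \<in> S" "y \<in> S" using po_D(1,2)[OF po that] by auto
    have "s x \<in> {1..card S}" "s y \<in> {1..card S}" using bs xy unfolding bij_betw_def by auto
    then have "hT ?T (s y) < hT ?T (s x)" using hT_mono[OF Tf(1)] Tf(2) lt by auto
    then show False using hs xy fo(3)[OF that] by simp
  qed
  have sL: "s \<in> linear_extensions S P" unfolding linear_extensions_def using bs ms
    by (auto simp: s_def)
  have "Phi S (s, ?T) = f"
  proof (rule extensionalityI[of _ S])
    show "Phi S (s, ?T) \<in> extensional S" by (simp add: Phi_def)
    show "f \<in> extensional S" by (rule fo(1))
    fix x assume "x \<in> S" then show "Phi S (s, ?T) x = f x" using hs by (simp add: Phi_def)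
  qed
  then show ?thesis using sL TS by (metis SigmaI image_eqI)
qed

lemma INJ_card: "card (INJ m) = num_linear_extensions S P * (Suc m choose card S)"
proof -
  have "Phi S ` (linear_extensions S P \<times> Sub m (card S)) = INJ m"
    using Phi_INJ Phi_surj by blast
  then have "card (INJ m) = card (linear_extensions S P \<times> Sub m (card S))"
    using card_image[OF Phi_inj] by metis
  then show ?thesis by (simp add: card_cartesian_product card_Sub num_linear_extensions_def)
qed

lemma NI_card:
  "card {f \<in> PiE S (\<lambda>_. {..m}). \<not> inj_on f S} \<le> card S * card S * Suc m ^ (card S - 1)"
proof -
  define I where "I = {p \<in> S \<times> S. fst p \<noteq> snd p}"
  define A where "A p = {f \<in> PiE S (\<lambda>_. {..m}). f (fst p) = f (snd p)}" for p
  have sub: "{f \<in> PiE S (\<lambda>_. {..m}). \<not> inj_on f S} \<subseteq> (\<Union>p\<in>I. A p)"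
    unfolding I_def A_def inj_on_def by auto
  have fI: "finite I" unfolding I_def using fin by auto
  have cI: "card I \<le> card S * card S"
  proof -
    have "card I \<le> card (S \<times> S)" unfolding I_def using fin by (intro card_mono) auto
    then show ?thesis by (simp add: card_cartesian_product)
  qed
  have cA: "card (A p) \<le> Suc m ^ (card S - 1)" if p: "p \<in> I" for p
  proof -
    obtain x y where xy: "p = (x, y)" "x \<in> S" "y \<in> S" "x \<noteq> y" using p unfolding I_def by auto
    have inj: "inj_on (\<lambda>f. restrict f (S - {x})) (A p)"
    proof (rule inj_onI)
      fix f g assume fg: "f \<in> A p" "g \<in> A p" "restrict f (S - {x}) = restrict g (S - {x})"
      have e: "f z = g z" if "z \<in> S - {x}" for z using fun_cong[OF fg(3), of z] that by simp
      have "f x = g x" using fg(1,2) e[of y] xy unfolding A_def by auto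
      then show "f = g" using fg(1,2) e unfolding A_def
        by (intro extensionalityI[of _ S]) (auto simp: PiE_iff)
    qed
    have im: "(\<lambda>f. restrict f (S - {x})) ` A p \<subseteq> PiE (S - {x}) (\<lambda>_. {..m})"
      unfolding A_def by (auto simp: PiE_iff extensional_def split: if_splits)
    have "card (A p) \<le> card (PiE (S - {x}) (\<lambda>_. {..m}))"
      by (rule card_inj_on_le[OF inj im]) (use fin in \<open>simp add: finite_PiE\<close>)
    also have "\<dots> = Suc m ^ (card S - 1)" using fin xy(2) by (simp add: card_PiE)
    finally show ?thesis .
  qed
  have "card {f \<in> PiE S (\<lambda>_. {..m}). \<not> inj_on f S} \<le> card (\<Union>p\<in>I. A p)"
    by (rule card_mono[OF _ sub]) (use fI fin in \<open>auto simp: A_def finite_PiE\<close>)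
  also have "\<dots> \<le> (\<Sum>p\<in>I. card (A p))" by (rule card_UN_le[OF fI])
  also have "\<dots> \<le> (\<Sum>p\<in>I. Suc m ^ (card S - 1))" using cA by (intro sum_mono) auto
  also have "\<dots> = card I * Suc m ^ (card S - 1)" by simp
  also have "\<dots> \<le> card S * card S * Suc m ^ (card S - 1)" using cI by (intro mult_right_mono) auto
  finally show ?thesis .
qed

lemma OP_bounds:
  "num_linear_extensions S P * (Suc m choose card S) \<le> card (OP S P m)"
  "card (OP S P m) \<le> num_linear_extensions S P * (Suc m choose card S) + card S * card S * Suc m ^ (card S - 1)"
proof -
  have fO: "finite (OP S P m)" by (rule OP_finite[OF fin])
  have "INJ m \<subseteq> OP S P m" unfolding INJ_def by auto
  then show "num_linear_extensions S P * (Suc m choose card S) \<le> card (OP S P m)"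
    using INJ_card card_mono[OF fO] by metis
  have "OP S P m \<subseteq> INJ m \<union> {f \<in> PiE S (\<lambda>_. {..m}). \<not> inj_on f S}"
    unfolding INJ_def OP_def by (auto simp: PiE_iff)
  then have "card (OP S P m) \<le> card (INJ m \<union> {f \<in> PiE S (\<lambda>_. {..m}). \<not> inj_on f S})"
  proof (rule card_mono[rotated])
    have "finite (PiE S (\<lambda>_. {..m}))" using fin by (simp add: finite_PiE)
    then have "finite {f \<in> PiE S (\<lambda>_. {..m}). \<not> inj_on f S}" by (rule finite_subset[rotated]) auto
    then show "finite (INJ m \<union> {f \<in> PiE S (\<lambda>_. {..m}). \<not> inj_on f S})"
      using fO unfolding INJ_def by auto
  qed
  also have "\<dots> \<le> card (INJ m) + card {f \<in> PiE S (\<lambda>_. {..m}). \<not> inj_on f S}" by (rule card_Un_le)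
  finally show "card (OP S P m) \<le> num_linear_extensions S P * (Suc m choose card S) + card S * card S * Suc m ^ (card S - 1)"
    using INJ_card[of m] NI_card[of m] by linarith
qed

end


lemma CP_mono:
  assumes po: "partial_order_on_set S P" and sub: "comp_graph S Q \<subseteq> comp_graph S P"
  shows "CP S P m \<subseteq> CP S Q m"
proof -
  have "pchain P C" if C: "C \<subseteq> S" "pchain Q C" for C
    unfolding pchain_def
  proof (intro ballI)
    fix x y assume xy: "x \<in> C" "y \<in> C"
    show "P x y \<or> P y x"
    proof (cases "x = y")
      case True then show ?thesis using po_D(3)[OF po] C(1) xy by auto
    next
      case False
      have "Q x y \<or> Q y x" using C(2) xy unfolding pchain_def by auto
      then have "{x, y} \<in> comp_graph S Q" unfolding comp_graph_def using C(1) xy False by blast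
      then have "{x, y} \<in> comp_graph S P" using sub by blast
      then obtain u v where "{x, y} = {u, v}" "P u v \<or> P v u" unfolding comp_graph_def by blast
      then show ?thesis by (metis doubleton_eq_iff)
    qed
  qed
  then show ?thesis unfolding CP_def by blast
qed

lemma sum_le_card_mult:
  fixes g :: "'a \<Rightarrow> nat"
  assumes "\<forall>x\<in>C. g x \<le> K"
  shows "sum g C \<le> card C * K"
  using sum_bounded_above[of C g K] assms by simp

lemma strict_gap:
  assumes fin: "finite S" and poP: "partial_order_on_set S P" and poQ: "partial_order_on_set S Q"
    and sub: "comp_graph S Q \<subseteq> comp_graph S P"
    and ab: "a \<in> S" "b \<in> S" "a \<noteq> b" "P a b \<or> P b a" "\<not> Q a b" "\<not> Q b a"
    and K: "K \<ge> 1"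
  shows "card (CP S P (4 * card S * K)) + K ^ card S \<le> card (CP S Q (4 * card S * K))"
proof -
  define n where "n = card S"
  define m where "m = 4 * n * K"
  define F where "F x = (if x = a \<or> x = b then {2*n*K+1..3*n*K} else {..<K})" for x
  define D where "D = PiE S F"
  have n1: "n \<ge> 1" using ab fin unfolding n_def by (metis One_nat_def Suc_leI card_gt_0_iff empty_iff)
  have DQ: "D \<subseteq> CP S Q m"
  proof
    fix g assume g: "g \<in> D"
    have gv: "\<And>x. x \<in> S \<Longrightarrow> g x \<in> F x" and ge: "g \<in> extensional S" using g unfolding D_def by (auto simp: PiE_iff)
    have "sum g C \<le> m" if C: "C \<subseteq> S" "pchain Q C" for C
    proof -
      have "\<not> (a \<in> C \<and> b \<in> C)" using C(2) ab(5,6) unfolding pchain_def by blast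
      then obtain e d where ed: "{e, d} = {a, b}" "d \<notin> C" by blast
      have fC: "finite C" using C fin finite_subset by blast
      have s1: "sum g (C - {e}) \<le> card (C - {e}) * K"
      proof (rule sum_le_card_mult, intro ballI)
        fix x assume x: "x \<in> C - {e}"
        then have "x \<noteq> a" "x \<noteq> b" using ed by (auto simp: doubleton_eq_iff)
        then show "g x \<le> K" using gv[of x] x C(1) by (auto simp: F_def)
      qed
      have c1: "card (C - {e}) \<le> n" unfolding n_def using C(1) fin by (intro card_mono) auto
      have ge3: "g e \<le> 3 * n * K" if "e \<in> C"
      proof -
        have "e = a \<or> e = b" using ed by (auto simp: doubleton_eq_iff)
        then show ?thesis using gv[of e] that C(1) by (auto simp: F_def)
      qed
      have "sum g C = sum g (C - {e}) + (if e \<in> C then g e else 0)"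
        using fC by (simp add: sum.remove)
      also have "\<dots> \<le> n * K + 3 * n * K"
      proof -
        have "sum g (C - {e}) \<le> n * K" using s1 mult_right_mono[OF c1, of K] by linarith
        moreover have "(if e \<in> C then g e else 0) \<le> 3 * n * K" using ge3 by auto
        ultimately show ?thesis by linarith
      qed
      finally show ?thesis unfolding m_def by (simp add: algebra_simps)
    qed
    then show "g \<in> CP S Q m" using ge unfolding CP_def by auto
  qed
  have DP: "D \<inter> CP S P m = {}"
  proof (rule ccontr)
    assume "D \<inter> CP S P m \<noteq> {}"
    then obtain g where g: "g \<in> D" "g \<in> CP S P m" by blast
    have "pchain P {a, b}" using ab(4) po_D(3)[OF poP] ab(1,2) unfolding pchain_def by auto
    then have "sum g {a, b} \<le> m" using g(2) ab(1,2) unfolding CP_def by auto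
    moreover have "g a \<ge> 2*n*K+1" "g b \<ge> 2*n*K+1" using g(1) ab(1,2) unfolding D_def F_def
      by (auto simp: PiE_iff)
    ultimately show False using ab(3) unfolding m_def by simp
  qed
  have cD: "K ^ n \<le> card D"
  proof -
    have "card D = (\<Prod>x\<in>S. card (F x))" unfolding D_def using fin by (simp add: card_PiE)
    moreover have "(\<Prod>x\<in>S. K) \<le> (\<Prod>x\<in>S. card (F x))"
    proof (rule prod_mono, intro conjI)
      fix x show "K \<le> card (F x)"
        using n1 by (auto simp: F_def)
    qed simp
    ultimately show ?thesis unfolding n_def by simp
  qed
  have fQ: "finite (CP S Q m)" by (rule CP_finite[OF fin poQ])
  have "card (CP S P m) + card D = card (CP S P m \<union> D)" using DP
    by (intro card_Un_disjoint[symmetric]) (use fQ DQ CP_finite[OF fin poP] in \<open>auto intro: finite_subset\<close>)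
  also have "\<dots> \<le> card (CP S Q m)" using fQ DQ CP_mono[OF poP sub, of m] by (intro card_mono) auto
  finally show ?thesis using cD unfolding m_def n_def by linarith
qed


lemma arith1:
  fixes n :: nat
  shows "n * n * Suc (n ^ (n + 2)) ^ (n - 1) < Suc (n ^ (n + 2)) choose n"
proof (cases "n = 0")
  case False
  define N where "N = Suc (n ^ (n + 2))"
  obtain k where k: "n = Suc k" using False by (cases n) auto
  have nN: "n \<le> N" unfolding N_def
  proof -
    have "1 \<le> n * n ^ n" using False by simp
    then have "n * 1 \<le> n * (n * n ^ n)" by (rule mult_le_mono2)
    then have "n \<le> n ^ (n + 2)" by (simp add: power_add power2_eq_square algebra_simps)
    then show "n \<le> Suc (n ^ (n + 2))" by (rule le_SucI)
  qed
  have "(real N / real n) ^ n \<le> real (N choose n)" using binomial_ge_n_over_k_pow_k[OF nN, where 'a=real] by simp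
  then have "real N ^ n \<le> real n ^ n * real (N choose n)"
    using False by (simp add: power_divide divide_le_eq mult.commute)
  then have b1: "N ^ n \<le> n ^ n * (N choose n)" by (metis of_nat_le_iff of_nat_mult of_nat_power)
  have "n ^ n * (n * n * N ^ (n - 1)) = n ^ (n + 2) * N ^ k" using k by (simp add: power_add algebra_simps)
  also have "\<dots> < N * N ^ k" unfolding N_def using k by (intro mult_strict_right_mono) auto
  also have "\<dots> = N ^ n" using k by simp
  finally have "n ^ n * (n * n * N ^ (n - 1)) < n ^ n * (N choose n)" using b1 by linarith
  then show ?thesis unfolding N_def by (meson mult_less_cancel1)
qed simp

lemma arith2:
  fixes n :: nat
  assumes n: "n \<ge> 1"
  defines "K \<equiv> n * n * (5 * n) ^ (n - 1) + 1"
  shows "n * n * Suc (4 * n * K) ^ (n - 1) < K ^ n"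
proof -
  obtain k where k: "n = Suc k" using n by (cases n) auto
  have K1: "K \<ge> 1" unfolding K_def by simp
  have "Suc (4 * n * K) \<le> 5 * n * K" using n K1 by (simp add: algebra_simps)
  then have "n * n * Suc (4 * n * K) ^ (n - 1) \<le> n * n * (5 * n * K) ^ (n - 1)"
    by (intro mult_left_mono power_mono) auto
  also have "\<dots> = (n * n * (5 * n) ^ (n - 1)) * K ^ k" 
  proof -
    have "n - 1 = k" using k by simp
    then show ?thesis by (simp only: power_mult_distrib mult.assoc)
  qed
  also have "\<dots> < K * K ^ k" unfolding K_def by (intro mult_strict_right_mono) auto
  also have "\<dots> = K ^ n" using k by simp
  finally show ?thesis .
qed


theorem mainTheorem8:
  fixes S :: "'a set" and P Q :: "'a \<Rightarrow> 'a \<Rightarrow> bool"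
  assumes "finite S"
    and "partial_order_on_set S P"
    and "partial_order_on_set S Q"
    and "comp_graph S Q \<subseteq> comp_graph S P"
  shows "num_linear_extensions S Q \<ge> num_linear_extensions S P
         \<and> (comp_graph S Q \<subset> comp_graph S P
              \<longrightarrow> num_linear_extensions S Q > num_linear_extensions S P)"
proof -
  note fin = assms(1) and poP = assms(2) and poQ = assms(3) and sub = assms(4)
  define n where "n = card S"
  define eP where "eP = num_linear_extensions S P"
  define eQ where "eQ = num_linear_extensions S Q"
  have chainP: "eP * (Suc m choose n) \<le> card (CP S P m)" for m
    using OP_bounds(1)[OF fin poP, of m] OP_CP_card[OF fin poP, of m] unfolding eP_def n_def by simp
  have chainQ: "card (CP S Q m) \<le> eQ * (Suc m choose n) + n * n * Suc m ^ (n - 1)" for m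
    using OP_bounds(2)[OF fin poQ, of m] OP_CP_card[OF fin poQ, of m] unfolding eQ_def n_def by simp
  have mono: "card (CP S P m) \<le> card (CP S Q m)" for m
    using CP_mono[OF poP sub, of m] CP_finite[OF fin poQ, of m] by (intro card_mono)
  have key: "eP * (Suc m choose n) \<le> eQ * (Suc m choose n) + n * n * Suc m ^ (n - 1)" for m
    using chainP[of m] mono[of m] chainQ[of m] by linarith
  have ge: "eP \<le> eQ"
  proof (rule ccontr)
    assume "\<not> eP \<le> eQ"
    then have "eP \<ge> eQ + 1" by simp
    then have "(eQ + 1) * (Suc (n ^ (n + 2)) choose n) \<le> eP * (Suc (n ^ (n + 2)) choose n)"
      by (intro mult_right_mono) auto
    then show False using key[of "n ^ (n + 2)"] arith1[of n] by (simp add: algebra_simps)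
  qed
  have strict: "eP < eQ" if proper: "comp_graph S Q \<subset> comp_graph S P"
  proof (rule ccontr)
    assume "\<not> eP < eQ"
    then have eq: "eQ = eP" using ge by simp
    obtain e where e: "e \<in> comp_graph S P" "e \<notin> comp_graph S Q" using proper by blast
    then obtain a b where ab: "e = {a, b}" "a \<in> S" "b \<in> S" "a \<noteq> b" "P a b \<or> P b a"
      unfolding comp_graph_def by blast
    have nq: "\<not> Q a b" "\<not> Q b a" using e(2) ab unfolding comp_graph_def by blast+
    have n1: "n \<ge> 1" using ab fin unfolding n_def by (metis One_nat_def Suc_leI card_gt_0_iff empty_iff)
    define K where "K = n * n * (5 * n) ^ (n - 1) + 1"
    have K1: "K \<ge> 1" unfolding K_def by simp
    have gap: "card (CP S P (4 * n * K)) + K ^ n \<le> card (CP S Q (4 * n * K))"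
      using strict_gap[OF fin poP poQ sub ab(2,3,4,5) nq K1] unfolding n_def by simp
    have "K ^ n \<le> n * n * Suc (4 * n * K) ^ (n - 1)"
      using gap chainP[of "4 * n * K"] chainQ[of "4 * n * K"] unfolding eq by linarith
    then show False using arith2[OF n1] unfolding K_def by simp
  qed
  show ?thesis using ge strict unfolding eP_def eQ_def by auto
qed

end
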